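(* Let $f=c_{20}U_1^2+c_{11}U_1U_2+c_{02}U_2^2\in\mathbb C[U_1,U_2]$ with $c_{20},c_{11},c_{02}\in\mathbb C$. If $\mathcal L(f^m)=0$ for all $m\ge1$, then $f=0$.
   Context: $\mathcal L:\mathbb C[U_1,U_2]\to\mathbb C$ is the $\mathbb C$-linear map defined on monomials by $\mathcal L(U_1^{\ell_1}U_2^{\ell_2})=\ell_1!\,\ell_2!$. *)

theory Defs
  imports "HOL-Computational_Algebra.Polynomial"
begin

text \<open>Bivariate polynomials C[U1,U2] are represented as complex poly poly:
  the outer variable is U2, the inner (coefficient) variable is U1.
  The coefficient of U1^j U2^i in p is coeff (coeff p i) j.\<close>

definition U1 :: "complex poly poly" where "U1 = [:[:0, 1:]:]"
definition U2 :: "complex poly poly" where "U2 = [:0, 1:]"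
definition cst :: "complex \<Rightarrow> complex poly poly" where "cst c = [:[:c:]:]"

definition L :: "complex poly poly \<Rightarrow> complex" where
  "L p = (\<Sum>i\<le>degree p. \<Sum>j\<le>degree (coeff p i).
            coeff (coeff p i) j * of_nat (fact j * fact i))"

end

theory Submission
  imports Defs
begin

definition Lin :: "complex poly \<Rightarrow> complex" where
  "Lin q = (\<Sum>j\<le>degree q. coeff q j * of_nat (fact j))"

lemma sum_deg_ext:
  assumes "degree p \<le> N" "\<And>i. h 0 i = 0"
  shows "(\<Sum>i\<le>degree p. h (coeff p i) i) = (\<Sum>i\<le>N. h (coeff p i) i)"
proof (rule sum.mono_neutral_left)
  show "\<forall>i\<in>{..N} - {..degree p}. h (coeff p i) i = 0"
  proof
    fix i assume "i \<in> {..N} - {..degree p}"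
    hence "coeff p i = 0" by (intro coeff_eq_0) auto
    thus "h (coeff p i) i = 0" using assms(2) by simp
  qed
qed (use assms(1) in auto)

lemma Lin_bound: "degree q \<le> N \<Longrightarrow> Lin q = (\<Sum>j\<le>N. coeff q j * of_nat (fact j))"
  unfolding Lin_def using sum_deg_ext[of q N "\<lambda>x j. x * of_nat (fact j)"] by simp

lemma L_Lin: "L p = (\<Sum>i\<le>degree p. Lin (coeff p i) * of_nat (fact i))"
  unfolding L_def Lin_def by (simp add: sum_distrib_right mult.assoc)

lemma Lin_0: "Lin 0 = 0" by (simp add: Lin_def)

lemma L_bound: "degree p \<le> N \<Longrightarrow> L p = (\<Sum>i\<le>N. Lin (coeff p i) * of_nat (fact i))"
  unfolding L_Lin using sum_deg_ext[of p N "\<lambda>x i. Lin x * of_nat (fact i)"] by (simp add: Lin_0)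

lemma Lin_add: "Lin (p + q) = Lin p + Lin q"
proof -
  define N where "N = max (degree p) (degree q)"
  have "degree (p+q) \<le> N" unfolding N_def by (rule degree_add_le) auto
  hence "Lin (p+q) = (\<Sum>j\<le>N. coeff (p+q) j * of_nat (fact j))" by (rule Lin_bound)
  also have "\<dots> = Lin p + Lin q"
    by (subst (1 2) Lin_bound[of _ N]) (auto simp: N_def sum.distrib distrib_right)
  finally show ?thesis .
qed

lemma Lin_smult: "Lin (smult c q) = c * Lin q"
  by (subst (1 2) Lin_bound[of _ "degree q"]) (auto simp: degree_smult_le sum_distrib_left mult.assoc)

lemma L_add: "L (p + q) = L p + L q"
proof -
  define N where "N = max (degree p) (degree q)"
  have "degree (p+q) \<le> N" unfolding N_def by (rule degree_add_le) auto
  hence "L (p+q) = (\<Sum>j\<le>N. Lin (coeff (p+q) j) * of_nat (fact j))" by (rule L_bound)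
  also have "\<dots> = L p + L q"
    by (subst (1 2) L_bound[of _ N]) (auto simp: N_def sum.distrib distrib_right Lin_add)
  finally show ?thesis .
qed

lemma const_mult: "[:c:] * x = smult c x" by simp

lemma cst_mult_eq: "cst c * p = smult [:c:] p"
  by (simp add: cst_def)

lemma L_cst: "L (cst c * p) = c * L p"
  unfolding cst_mult_eq
  by (subst (1 2) L_bound[of _ "degree p"])
     (auto simp: degree_smult_le sum_distrib_left mult.assoc Lin_smult const_mult)

lemma U_monom: "U1 ^ i * U2 ^ j = monom (monom 1 i) j"
proof -
  have "U1 ^ i = [:monom 1 i:]" by (simp add: U1_def poly_const_pow monom_altdef)
  moreover have "U2 ^ j = monom 1 j" by (simp add: U2_def monom_altdef)
  ultimately show ?thesis by (simp add: smult_monom)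
qed

lemma L_monom: "L (monom q j) = Lin q * of_nat (fact j)"
proof -
  have "L (monom q j) = (\<Sum>i\<le>j. if i = j then Lin q * of_nat (fact j) else 0)"
    by (subst L_bound[of _ j]) (simp add: degree_monom_le, rule sum.cong, auto simp: Lin_0)
  thus ?thesis by simp
qed

lemma Lin_monom: "Lin (monom 1 i) = of_nat (fact i)"
proof -
  have "Lin (monom 1 i) = (\<Sum>j\<le>i. if j = i then of_nat (fact i) else 0)"
    by (subst Lin_bound[of _ i]) (simp add: degree_monom_le, rule sum.cong, auto)
  thus ?thesis by simp
qed

lemma L_term: "L (cst k * (U1 ^ i * U2 ^ j)) = k * of_nat (fact i) * of_nat (fact j)"
  by (simp add: L_cst U_monom L_monom Lin_monom)



lemma cst_add: "cst (x + y) = cst x + cst y" by (simp add: cst_def)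
lemma cst_mult: "cst (x * y) = cst x * cst y" by (simp add: cst_def)
lemma cst_power: "cst (x ^ n) = cst x ^ n" by (simp add: cst_def poly_const_pow)
lemma cst_numeral: "cst (numeral n) = numeral n" by (simp add: cst_def numeral_poly)

lemma final_alg:
  fixes a b c :: complex
  assumes e1: "2*a + b + 2*c = 0"
    and e2: "a^2*24 + 2*a*b*6 + (b^2+2*a*c)*4 + 2*b*c*6 + c^2*24 = 0"
    and e3: "a^3*720 + 3*a^2*b*120 + (3*a^2*c+3*a*b^2)*48 + (b^3+6*a*b*c)*36
             + (3*a*c^2+3*b^2*c)*48 + 3*b*c^2*120 + c^3*720 = 0"
  shows "a = 0 \<and> b = 0 \<and> c = 0"
proof -
  define s where "s = a + c"
  have b: "b = -2*s" using e1 unfolding s_def by (simp add: algebra_simps) (metis add.commute add_eq_0_iff2 mult_2 add.assoc)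
  have "8*(2*s^2 - 5*a*c) = 0" using e2 unfolding b s_def by (simp add: algebra_simps power2_eq_square)
  hence f2: "2*s^2 - 5*a*c = 0" by simp
  have "144*(s * (2*s^2 - 7*a*c)) = 0" using e3 unfolding b s_def by (simp add: algebra_simps power2_eq_square power3_eq_cube)
  hence f3: "s * (2*s^2 - 7*a*c) = 0" by simp
  have s0: "s = 0"
  proof (rule ccontr)
    assume "s \<noteq> 0"
    hence "2*s^2 - 7*a*c = 0" using f3 by simp
    with f2 have "a*c = 0" by algebra
    with f2 have "s^2 = 0" by algebra
    thus False using \<open>s \<noteq> 0\<close> by simp
  qed
  hence c: "c = -a" unfolding s_def by algebra
  have "5*a^2 = 0" using f2 s0 unfolding c by (simp add: power2_eq_square)
  hence "a = 0" by simp
  thus ?thesis using c b s0 by simp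
qed

theorem proposition4p14:
  fixes c20 c11 c02 :: complex
  defines "f \<equiv> cst c20 * U1 ^ 2 + cst c11 * U1 * U2 + cst c02 * U2 ^ 2"
  assumes "\<And>m::nat. m \<ge> 1 \<Longrightarrow> L (f ^ m) = 0"
  shows "f = 0"
proof -
  note cs = cst_add cst_mult cst_power cst_numeral
  have x1: "f = cst c20 * (U1^2*U2^0) + cst c11 * (U1^1*U2^1) + cst c02 * (U1^0*U2^2)"
    unfolding f_def by (simp add: algebra_simps)
  have x2: "f^2 = cst (c20^2) * (U1^4*U2^0) + cst (2*c20*c11) * (U1^3*U2^1)
     + cst (c11^2+2*c20*c02) * (U1^2*U2^2) + cst (2*c11*c02) * (U1^1*U2^3) + cst (c02^2) * (U1^0*U2^4)"
    unfolding f_def cs by (simp add: algebra_simps power2_eq_square power_numeral_reduce)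
  have x3: "f^3 = cst (c20^3) * (U1^6*U2^0) + cst (3*c20^2*c11) * (U1^5*U2^1)
     + cst (3*c20^2*c02+3*c20*c11^2) * (U1^4*U2^2) + cst (c11^3+6*c20*c11*c02) * (U1^3*U2^3)
     + cst (3*c20*c02^2+3*c11^2*c02) * (U1^2*U2^4) + cst (3*c11*c02^2) * (U1^1*U2^5) + cst (c02^3) * (U1^0*U2^6)"
    unfolding f_def cs by (simp add: algebra_simps power2_eq_square power3_eq_cube power_numeral_reduce)
  have "L f = 0" using assms(2)[of 1] by simp
  hence e1: "2*c20 + c11 + 2*c02 = 0" unfolding x1 L_add L_term by (simp add: algebra_simps)
  have "L (f^2) = 0" using assms(2)[of 2] by simp
  hence e2: "c20^2*24 + 2*c20*c11*6 + (c11^2+2*c20*c02)*4 + 2*c11*c02*6 + c02^2*24 = 0"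
    unfolding x2 L_add L_term by (simp add: fact_numeral algebra_simps)
  have "L (f^3) = 0" using assms(2)[of 3] by simp
  hence e3: "c20^3*720 + 3*c20^2*c11*120 + (3*c20^2*c02+3*c20*c11^2)*48 + (c11^3+6*c20*c11*c02)*36
             + (3*c20*c02^2+3*c11^2*c02)*48 + 3*c11*c02^2*120 + c02^3*720 = 0"
    unfolding x3 L_add L_term by (simp add: fact_numeral algebra_simps)
  from final_alg[OF e1 e2 e3] show ?thesis unfolding f_def by (simp add: cst_def)
qed

end
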